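(* Consider the D2EAL algorithm (without periodic reset) described in the context with horizon $T\ge1$ and $\eta_\alpha,\eta_w>0$, and fix $i\in[N]$. Assume: (Assumption 1) $\Omega_i(t)\subseteq\Omega_i(t-1)$ for all $t=1,\dots,T$; (Assumption 2) $|l(x_1,y)-l(x_2,y)|\le L_1\|x_1-x_2\|$ for all $x_1,x_2\in\mathcal A$, $y\in\mathcal Y$, for some constant $L_1\ge0$; (Assumption 3) there are nonnegative numbers $\delta_1,\dots,\delta_T$ with $\|f_{t,k}-f_{t,j}\|\le\delta_t$ for all $k,j\in[N]$, $t=1,\dots,T$; (Assumption 4) with $i^*\in\arg\min_{j\in[N]}L_{T,j}$, one has $L_{T,i^*}\le c_0T^{1-\alpha}$ for some constants $c_0\ge0$ and $\alpha\in(0,1]$. Let $\Delta_o\ge\sum_{t=1}^T\delta_t$ and $j^*\in\arg\min_{j\in[N]}\bar L_{T,j}$. Then $$R_i^{GS}(T):=\hat L_{T,i}-\bar L_{T,j^*}\le\frac{\eta_wT}{8}+\frac{\log d_i(0)}{\eta_w}+\frac{\eta_\alpha T}{8}+\frac{\log2}{\eta_\alpha}+L_1\Delta_o+c_0T^{1-\alpha}.$$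
   Context: Setup. There are $N\ge 1$ agents indexed by $i\in[N]$ and a horizon $T\ge1$. The outcome space $\mathcal Y$ and action space $\mathcal A$ are convex subsets of $\mathbb R^n$, $\|\cdot\|$ is the Euclidean norm. The loss $l:\mathcal A\times\mathcal Y\to[0,1]$ is convex in its first argument. The target sequence $y_1,\dots,y_T\in\mathcal Y$ is arbitrary. For each agent $i$ and each $t\ge1$, an "expert" supplies an arbitrary prediction $f_{t,i}\in\mathcal A$ of $y_t$ (available at time $t-1$). Agents communicate over a time-varying undirected graph; $\Omega_i(t)$ is the set of neighbours of agent $i$ at time $t$, $\Lambda_i(t):=\Omega_i(t)\cup\{i\}$ and $d_i(t):=|\Lambda_i(t)|$. D2EAL (without periodic reset). Initialize $\hat f_{0,i}=f_{1,i}$, $\hat\alpha_i(0)=\hat\alpha'_i(0)=\hat w_{ii}(0)=1$ for all $i$. For $t=0,1,\dots,T-1$, each agent $i$ computes: $\alpha_i(t)=\hat\alpha_i(t)/(\hat\alpha_i(t)+\hat\alpha'_i(t))$; individual prediction $\bar f_{t+1,i}=\alpha_i(t)f_{t+1,i}+(1-\alpha_i(t))\hat f_{t,i}$; social weights $w_{ij}(t)=\hat w_{jj}(t)/\sum_{j'\in\Lambda_i(t)}\hat w_{j'j'}(t)$ for $j\in\Lambda_i(t)$ and $w_{ij}(t)=0$ otherwise; social prediction $\hat f_{t+1,i}=\sum_{j\in\Lambda_i(t)}w_{ij}(t)\bar f_{t+1,j}$. After $y_{t+1}$ is revealed, define the losses $l_{t+1,i}=l(f_{t+1,i},y_{t+1})$,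 $\hat l^-_{t+1,i}=l(\hat f_{t,i},y_{t+1})$, $\bar l_{t+1,i}=l(\bar f_{t+1,i},y_{t+1})$, $\hat l_{t+1,i}=l(\hat f_{t+1,i},y_{t+1})$, and update $\hat\alpha_i(t+1)=\hat\alpha_i(t)e^{-\eta_\alpha l_{t+1,i}}$, $\hat\alpha'_i(t+1)=\hat\alpha'_i(t)e^{-\eta_\alpha \hat l^-_{t+1,i}}$, $\hat w_{ii}(t+1)=\hat w_{ii}(t)e^{-\eta_w\bar l_{t+1,i}}$. Cumulative losses: $L_{T,i}=\sum_{t=1}^T l_{t,i}$, $\hat L^-_{T,i}=\sum_{t=1}^T\hat l^-_{t,i}$, $\bar L_{T,i}=\sum_{t=1}^T\bar l_{t,i}$, $\hat L_{T,i}=\sum_{t=1}^T\hat l_{t,i}$. *)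

theory Defs
  imports "HOL-Analysis.Analysis"
begin

text \<open>Agents are natural numbers i < N.
  Expert predictions: f t i (time t >= 1, agent i).  Step sizes ea (eta_alpha), ew (eta_w).
  The state at time t of agent i is the tuple
  (alpha_hat_i(t), alpha_hat'_i(t), w_hat_ii(t), f_hat_{t,i}).\<close>

definition Lam :: "(nat \<Rightarrow> nat \<Rightarrow> nat set) \<Rightarrow> nat \<Rightarrow> nat \<Rightarrow> nat set" where
  "Lam Omega i t = insert i (Omega i t)"

definition st_alpha :: "(nat \<Rightarrow> real \<times> real \<times> real \<times> 'a) \<Rightarrow> nat \<Rightarrow> real" where
  "st_alpha S i = fst (S i) / (fst (S i) + fst (snd (S i)))"

text \<open>individual prediction bar f_{t+1,i} computed from the state at time t\<close>
definition st_fbar :: "(nat \<Rightarrow> nat \<Rightarrow> 'a::real_vector) \<Rightarrow> (nat \<Rightarrow> real \<times> real \<times> real \<times> 'a)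
    \<Rightarrow> nat \<Rightarrow> nat \<Rightarrow> 'a" where
  "st_fbar f S t i = st_alpha S i *\<^sub>R f (Suc t) i + (1 - st_alpha S i) *\<^sub>R snd (snd (snd (S i)))"

definition st_w :: "(nat \<Rightarrow> nat \<Rightarrow> nat set) \<Rightarrow> (nat \<Rightarrow> real \<times> real \<times> real \<times> 'a)
    \<Rightarrow> nat \<Rightarrow> nat \<Rightarrow> nat \<Rightarrow> real" where
  "st_w Omega S t i j = (if j \<in> Lam Omega i t
      then fst (snd (snd (S j))) / (\<Sum>j'\<in>Lam Omega i t. fst (snd (snd (S j')))) else 0)"

primrec d2eal_state :: "real \<Rightarrow> real \<Rightarrow> ('a::real_vector \<Rightarrow> 'a \<Rightarrow> real) \<Rightarrow> (nat \<Rightarrow> nat \<Rightarrow> 'a)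
    \<Rightarrow> (nat \<Rightarrow> 'a) \<Rightarrow> (nat \<Rightarrow> nat \<Rightarrow> nat set) \<Rightarrow> nat \<Rightarrow> (nat \<Rightarrow> real \<times> real \<times> real \<times> 'a)" where
  "d2eal_state ea ew l f y Omega 0 = (\<lambda>i. (1, 1, 1, f 1 i))"
| "d2eal_state ea ew l f y Omega (Suc t) =
     (let S = d2eal_state ea ew l f y Omega t in
      (\<lambda>i. (fst (S i) * exp (- ea * l (f (Suc t) i) (y (Suc t))),
            fst (snd (S i)) * exp (- ea * l (snd (snd (snd (S i)))) (y (Suc t))),
            fst (snd (snd (S i))) * exp (- ew * l (st_fbar f S t i) (y (Suc t))),
            (\<Sum>j\<in>Lam Omega i t. st_w Omega S t i j *\<^sub>R st_fbar f S t j))))"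

definition fhat where
  "fhat ea ew l f y Omega t i = snd (snd (snd (d2eal_state ea ew l f y Omega t i)))"

text \<open>individual prediction bar f_{t,i}, for t >= 1\<close>
definition fbar where
  "fbar ea ew l f y Omega t i = st_fbar f (d2eal_state ea ew l f y Omega (t - 1)) (t - 1) i"

definition cumL :: "('a \<Rightarrow> 'a \<Rightarrow> real) \<Rightarrow> (nat \<Rightarrow> nat \<Rightarrow> 'a) \<Rightarrow> (nat \<Rightarrow> 'a) \<Rightarrow> nat \<Rightarrow> nat \<Rightarrow> real" where
  "cumL l f y T i = (\<Sum>t=1..T. l (f t i) (y t))"

definition cumLbar where
  "cumLbar ea ew l f y Omega T i = (\<Sum>t=1..T. l (fbar ea ew l f y Omega t i) (y t))"

definition cumLhat where
  "cumLhat ea ew l f y Omega T i = (\<Sum>t=1..T. l (fhat ea ew l f y Omega t i) (y t))"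

end

theory Submission
  imports Defs "HOL-Probability.Hoeffding"
begin


lemma hoeff2:
  fixes p h :: real
  assumes "0 \<le> p" "p \<le> 1" "0 \<le> h"
  shows "1 - p + p * exp (- h) \<le> exp (- h * p + h\<^sup>2 / 8)"
proof -
  define q where "q = 1 + (1 - p) * (exp h - 1)"
  have qpos: "q > 0" unfolding q_def using assms
    by (intro add_pos_nonneg mult_nonneg_nonneg) auto
  have "- h * (1 - p) + ln q \<le> h\<^sup>2 / 8"
    unfolding q_def by (rule Hoeffdings_lemma_aux) (use assms in auto)
  hence "ln q \<le> h * (1 - p) + h\<^sup>2 / 8" by simp
  hence "q \<le> exp (h * (1 - p) + h\<^sup>2 / 8)"
    using qpos by (metis exp_le_cancel_iff exp_ln)
  hence "exp (- h) * q \<le> exp (- h) * exp (h * (1 - p) + h\<^sup>2 / 8)"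
    by (intro mult_left_mono) auto
  also have "exp (- h) * exp (h * (1 - p) + h\<^sup>2 / 8) = exp (- h * p + h\<^sup>2 / 8)"
    by (simp add: exp_add[symmetric] algebra_simps)
  also have "exp (- h) * q = 1 - p + p * exp (- h)"
    unfolding q_def by (simp add: algebra_simps exp_minus field_simps)
  finally show ?thesis .
qed

lemma convexp:
  fixes x h :: real
  assumes "0 \<le> x" "x \<le> 1" "0 \<le> h"
  shows "exp (- h * x) \<le> 1 - x + x * exp (- h)"
proof -
  have "exp (h * ((1 - x) *\<^sub>R 0 + x *\<^sub>R (-1))) \<le> (1 - x) * exp (h * 0) + x * exp (h * (-1))"
    using convex_onD[OF convex_on_exp[OF assms(3)], of x 0 "-1"] assms by simp
  thus ?thesis by simp
qed

lemma wsum_bound: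
  fixes w x :: "'b \<Rightarrow> real" and h :: real
  assumes fin: "finite S" and w: "\<And>j. j \<in> S \<Longrightarrow> 0 \<le> w j"
    and x: "\<And>j. j \<in> S \<Longrightarrow> 0 \<le> x j \<and> x j \<le> 1"
    and h: "0 \<le> h" and W: "sum w S > 0"
  shows "(\<Sum>j\<in>S. w j * exp (- h * x j)) \<le> sum w S * exp (- h * ((\<Sum>j\<in>S. w j * x j) / sum w S) + h\<^sup>2 / 8)"
proof -
  define W where "W = sum w S"
  define P where "P = (\<Sum>j\<in>S. w j * x j)"
  have "(\<Sum>j\<in>S. w j * exp (- h * x j)) \<le> (\<Sum>j\<in>S. w j * (1 - x j + x j * exp (- h)))"
    by (intro sum_mono mult_left_mono convexp) (use w x h in auto)
  also have "\<dots> = W - P + P * exp (- h)"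
    by (simp add: W_def P_def algebra_simps sum_subtractf sum_distrib_left sum_distrib_right sum.distrib)
  also have "\<dots> = W * (1 - P / W + P / W * exp (- h))"
    using W by (simp add: W_def field_simps)
  also have "\<dots> \<le> W * exp (- h * (P / W) + h\<^sup>2 / 8)"
  proof (intro mult_left_mono hoeff2)
    have "0 \<le> P" unfolding P_def by (intro sum_nonneg mult_nonneg_nonneg) (use w x in auto)
    thus "0 \<le> P / W" using W by (simp add: W_def)
    have "P \<le> W" unfolding P_def W_def
      by (intro sum_mono) (use w x in \<open>auto intro: mult_right_le_one_le\<close>)
    thus "P / W \<le> 1" using W by (simp add: W_def)
  qed (use W h in \<open>auto simp: W_def\<close>)
  finally show ?thesis by (simp add: W_def P_def)
qed



theorem theorem2:
  fixes N T :: nat and A Y :: "'a::euclidean_space set"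
    and l :: "'a \<Rightarrow> 'a \<Rightarrow> real" and f :: "nat \<Rightarrow> nat \<Rightarrow> 'a" and y :: "nat \<Rightarrow> 'a"
    and Omega :: "nat \<Rightarrow> nat \<Rightarrow> nat set"
    and ea ew L1 c0 alpha Delta_o :: real and delta :: "nat \<Rightarrow> real"
    and i istar jstar :: nat
  assumes N: "N \<ge> 1" and T: "T \<ge> 1"
    and convA: "convex A" and convY: "convex Y"
    and l_range: "\<And>x v. x \<in> A \<Longrightarrow> v \<in> Y \<Longrightarrow> 0 \<le> l x v \<and> l x v \<le> 1"
    and l_convex: "\<And>v. v \<in> Y \<Longrightarrow> convex_on A (\<lambda>x. l x v)"
    and yY: "\<And>t. y t \<in> Y"
    and fA: "\<And>t j. t \<ge> 1 \<Longrightarrow> j < N \<Longrightarrow> f t j \<in> A"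
    and graph_dom: "\<And>j t. j < N \<Longrightarrow> Omega j t \<subseteq> {..<N} - {j}"
    and graph_sym: "\<And>j k t. j < N \<Longrightarrow> k < N \<Longrightarrow> (k \<in> Omega j t \<longleftrightarrow> j \<in> Omega k t)"
    and ea: "ea > 0" and ew: "ew > 0"
    and i: "i < N"
    and A1: "\<And>t. 1 \<le> t \<Longrightarrow> t \<le> T \<Longrightarrow> Omega i t \<subseteq> Omega i (t - 1)"
    and L1: "L1 \<ge> 0"
    and A2: "\<And>x1 x2 v. x1 \<in> A \<Longrightarrow> x2 \<in> A \<Longrightarrow> v \<in> Y \<Longrightarrow> \<bar>l x1 v - l x2 v\<bar> \<le> L1 * norm (x1 - x2)"
    and delta_nn: "\<And>t. 1 \<le> t \<Longrightarrow> t \<le> T \<Longrightarrow> delta t \<ge> 0"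
    and A3: "\<And>t k j. 1 \<le> t \<Longrightarrow> t \<le> T \<Longrightarrow> k < N \<Longrightarrow> j < N \<Longrightarrow> norm (f t k - f t j) \<le> delta t"
    and istar: "istar < N" "\<And>j. j < N \<Longrightarrow> cumL l f y T istar \<le> cumL l f y T j"
    and c0: "c0 \<ge> 0" and alpha: "0 < alpha" "alpha \<le> 1"
    and A4: "cumL l f y T istar \<le> c0 * real T powr (1 - alpha)"
    and Delta_o: "Delta_o \<ge> (\<Sum>t=1..T. delta t)"
    and jstar: "jstar < N" "\<And>j. j < N \<Longrightarrow> cumLbar ea ew l f y Omega T jstar \<le> cumLbar ea ew l f y Omega T j"
  shows "cumLhat ea ew l f y Omega T i - cumLbar ea ew l f y Omega T jstar
     \<le> ew * real T / 8 + ln (real (card (Lam Omega i 0))) / ew + ea * real T / 8 + ln 2 / ea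
        + L1 * Delta_o + c0 * real T powr (1 - alpha)"
proof -
  define S where "S = d2eal_state ea ew l f y Omega"
  define ah where "ah t j = fst (S t j)" for t j
  define ah' where "ah' t j = fst (snd (S t j))" for t j
  define wh where "wh t j = fst (snd (snd (S t j)))" for t j
  define fh where "fh t j = snd (snd (snd (S t j)))" for t j
  define al where "al t j = ah t j / (ah t j + ah' t j)" for t j
  define fb where "fb t j = st_fbar f (S t) t j" for t j
  have fb_eq: "fb t j = al t j *\<^sub>R f (Suc t) j + (1 - al t j) *\<^sub>R fh t j" for t j
    by (simp add: fb_def st_fbar_def st_alpha_def al_def ah_def ah'_def fh_def)
  have S0: "ah 0 j = 1" "ah' 0 j = 1" "wh 0 j = 1" "fh 0 j = f 1 j" for j
    by (simp_all add: S_def ah_def ah'_def wh_def fh_def)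
  have ah_suc: "ah (Suc t) j = ah t j * exp (- ea * l (f (Suc t) j) (y (Suc t)))" for t j
    by (simp add: S_def ah_def Let_def)
  have ah'_suc: "ah' (Suc t) j = ah' t j * exp (- ea * l (fh t j) (y (Suc t)))" for t j
    by (simp add: S_def ah'_def fh_def Let_def)
  have wh_suc: "wh (Suc t) j = wh t j * exp (- ew * l (fb t j) (y (Suc t)))" for t j
    by (simp add: S_def wh_def fb_def Let_def)
  have fh_suc: "fh (Suc t) j = (\<Sum>k\<in>Lam Omega j t. (wh t k / (\<Sum>k'\<in>Lam Omega j t. wh t k')) *\<^sub>R fb t k)" for t j
    by (simp add: S_def fh_def fb_def wh_def Let_def st_w_def cong: sum.cong)
  have pos: "ah t j > 0 \<and> ah' t j > 0 \<and> wh t j > 0" for t j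
    by (induction t) (simp_all add: S0 ah_suc ah'_suc wh_suc)
  have Lfin: "finite (Lam Omega j t)" if "j < N" for j t
    using graph_dom[OF that, of t] unfolding Lam_def by (auto intro: finite_subset)
  have Lsub: "Lam Omega j t \<subseteq> {..<N}" if "j < N" for j t
    using graph_dom[OF that, of t] that unfolding Lam_def by auto
  have Lmem: "j \<in> Lam Omega j t" for j t by (simp add: Lam_def)
  have Wpos: "(\<Sum>k\<in>Lam Omega j t. wh t k) > 0" if "j < N" for j t
    by (rule sum_pos2[OF Lfin[OF that] Lmem]) (use pos in \<open>auto intro: less_imp_le\<close>)
  have al01: "0 \<le> al t j \<and> al t j \<le> 1" for t j
    using pos[of t j] by (simp add: al_def)
  have inA: "\<forall>j<N. fh t j \<in> A" for t
  proof (induction t)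
    case 0 thus ?case using fA by (simp add: S0)
  next
    case (Suc t)
    have fbA: "fb t k \<in> A" if "k < N" for k
      unfolding fb_eq using al01[of t k] Suc that fA[of "Suc t" k]
      by (intro convexD[OF convA]) auto
    show ?case
    proof (intro allI impI)
      fix j assume j: "j < N"
      show "fh (Suc t) j \<in> A" unfolding fh_suc
      proof (rule convex_sum[OF Lfin[OF j] convA])
        show "(\<Sum>k\<in>Lam Omega j t. wh t k / (\<Sum>k'\<in>Lam Omega j t. wh t k')) = 1"
          using Wpos[OF j, of t] by (simp add: sum_divide_distrib[symmetric])
      next
        fix k assume k: "k \<in> Lam Omega j t"
        show "0 \<le> wh t k / (\<Sum>k'\<in>Lam Omega j t. wh t k')"
          using pos[of t k] Wpos[OF j, of t] by (simp add: less_imp_le)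
        show "fb t k \<in> A" using fbA Lsub[OF j] k by blast
      qed
    qed
  qed
  have fbA: "fb t k \<in> A" if "k < N" for k t
    unfolding fb_eq using al01[of t k] inA that fA[of "Suc t" k]
    by (intro convexD[OF convA]) auto
  have lr: "0 \<le> l x (y t) \<and> l x (y t) \<le> 1" if "x \<in> A" for x t
    using l_range[OF that yY] .

  have ind_step: "ah (Suc t) i + ah' (Suc t) i \<le> (ah t i + ah' t i) * exp (- ea * l (fb t i) (y (Suc t)) + ea\<^sup>2 / 8)" for t
  proof -
    define x where "x = l (f (Suc t) i) (y (Suc t))"
    define z where "z = l (fh t i) (y (Suc t))"
    define a where "a = ah t i"
    define b where "b = ah' t i"
    define p where "p = al t i * x + (1 - al t i) * z"
    have x01: "0 \<le> x \<and> x \<le> 1" unfolding x_def using lr fA[of "Suc t" i] i by auto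
    have z01: "0 \<le> z \<and> z \<le> 1" unfolding z_def using lr inA i by auto
    have ab: "a > 0" "b > 0" using pos[of t i] by (auto simp: a_def b_def)
    have alv: "al t i = a / (a + b)" by (simp add: al_def a_def b_def)
    have "ah (Suc t) i + ah' (Suc t) i = a * exp (- ea * x) + b * exp (- ea * z)"
      by (simp add: ah_suc ah'_suc a_def b_def x_def z_def)
    also have "\<dots> \<le> a * (1 - x + x * exp (- ea)) + b * (1 - z + z * exp (- ea))"
      using ab x01 z01 ea by (intro add_mono mult_left_mono convexp) auto
    also have "\<dots> = (a + b) - (a * x + b * z) + (a * x + b * z) * exp (- ea)"
      by (simp add: algebra_simps)
    also have "(a * x + b * z) = (a + b) * p"
    proof -
      have nz: "a + b \<noteq> 0" using ab by simp
      have e1: "1 - a / (a + b) = b / (a + b)" using nz by (simp add: field_simps)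
      have "(a + b) * (a / (a + b) * x + b / (a + b) * z) = a * x + b * z"
        using nz by (simp add: distrib_left)
      thus ?thesis unfolding p_def alv e1 by simp
    qed
    also have "(a + b) - (a + b) * p + (a + b) * p * exp (- ea) = (a + b) * (1 - p + p * exp (- ea))"
      by (simp add: algebra_simps)
    also have "\<dots> \<le> (a + b) * exp (- ea * p + ea\<^sup>2 / 8)"
    proof (intro mult_left_mono hoeff2)
      show "0 \<le> p" unfolding p_def using al01[of t i] x01 z01 by simp
      have "p \<le> al t i * 1 + (1 - al t i) * 1" unfolding p_def
        using al01[of t i] x01 z01 by (intro add_mono mult_left_mono) auto
      thus "p \<le> 1" by simp
    qed (use ab ea in auto)
    also have "\<dots> \<le> (a + b) * exp (- ea * l (fb t i) (y (Suc t)) + ea\<^sup>2 / 8)"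
    proof -
      have "l (fb t i) (y (Suc t)) = l ((1 - (1 - al t i)) *\<^sub>R f (Suc t) i + (1 - al t i) *\<^sub>R fh t i) (y (Suc t))"
        by (simp add: fb_eq)
      also have "\<dots> \<le> (1 - (1 - al t i)) * x + (1 - al t i) * z"
        unfolding x_def z_def
        by (rule convex_onD[OF l_convex[OF yY]]) (use al01[of t i] fA[of "Suc t" i] i inA in auto)
      finally have "l (fb t i) (y (Suc t)) \<le> p" by (simp add: p_def)
      thus ?thesis using ab ea by (intro mult_left_mono) auto
    qed
    finally show ?thesis by (simp add: a_def b_def)
  qed
  have ind: "ah t i + ah' t i \<le> 2 * exp (- ea * (\<Sum>s=1..t. l (fb (s - 1) i) (y s)) + real t * ea\<^sup>2 / 8)" for t
  proof (induction t)
    case 0 thus ?case by (simp add: S0)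
  next
    case (Suc t)
    have "ah (Suc t) i + ah' (Suc t) i \<le> (ah t i + ah' t i) * exp (- ea * l (fb t i) (y (Suc t)) + ea\<^sup>2 / 8)"
      by (rule ind_step)
    also have "\<dots> \<le> 2 * exp (- ea * (\<Sum>s=1..t. l (fb (s - 1) i) (y s)) + real t * ea\<^sup>2 / 8)
                   * exp (- ea * l (fb t i) (y (Suc t)) + ea\<^sup>2 / 8)"
      by (rule mult_right_mono[OF Suc]) simp
    also have "\<dots> = 2 * exp (- ea * (\<Sum>s=1..Suc t. l (fb (s - 1) i) (y s)) + real (Suc t) * ea\<^sup>2 / 8)"
      by (simp add: exp_add[symmetric] algebra_simps)
    finally show ?case .
  qed
  have ah_cf: "ah t j = exp (- ea * (\<Sum>s=1..t. l (f s j) (y s)))" for t j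
    by (induction t) (simp_all add: S0 ah_suc exp_add[symmetric] algebra_simps)
  have wh_cf: "wh t j = exp (- ew * (\<Sum>s=1..t. l (fb (s - 1) j) (y s)))" for t j
    by (induction t) (simp_all add: S0 wh_suc exp_add[symmetric] algebra_simps)
  have soc_step: "(\<Sum>j\<in>Lam Omega i t. wh (Suc t) j) \<le> (\<Sum>j\<in>Lam Omega i t. wh t j) * exp (- ew * l (fh (Suc t) i) (y (Suc t)) + ew\<^sup>2 / 8)" for t
  proof -
    define W where "W = (\<Sum>j\<in>Lam Omega i t. wh t j)"
    define lb where "lb j = l (fb t j) (y (Suc t))" for j
    have W: "W > 0" unfolding W_def by (rule Wpos[OF i])
    have lb01: "0 \<le> lb j \<and> lb j \<le> 1" if "j \<in> Lam Omega i t" for j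
      unfolding lb_def using lr fbA Lsub[OF i] that by blast
    have "(\<Sum>j\<in>Lam Omega i t. wh (Suc t) j) = (\<Sum>j\<in>Lam Omega i t. wh t j * exp (- ew * lb j))"
      by (simp add: wh_suc lb_def)
    also have "\<dots> \<le> W * exp (- ew * ((\<Sum>j\<in>Lam Omega i t. wh t j * lb j) / W) + ew\<^sup>2 / 8)"
      unfolding W_def
      by (rule wsum_bound[OF Lfin[OF i]]) (use pos lb01 ew W[unfolded W_def] in \<open>auto intro: less_imp_le\<close>)
    also have "\<dots> \<le> W * exp (- ew * l (fh (Suc t) i) (y (Suc t)) + ew\<^sup>2 / 8)"
    proof -
      have "l (fh (Suc t) i) (y (Suc t)) \<le> (\<Sum>k\<in>Lam Omega i t. (wh t k / W) * l (fb t k) (y (Suc t)))"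
        unfolding fh_suc W_def[symmetric]
      proof (rule convex_on_sum[OF Lfin[OF i] _ l_convex[OF yY]])
        show "Lam Omega i t \<noteq> {}" using Lmem by blast
        show "(\<Sum>k\<in>Lam Omega i t. wh t k / W) = 1"
          using W by (simp add: W_def sum_divide_distrib[symmetric])
      next
        fix k assume k: "k \<in> Lam Omega i t"
        show "0 \<le> wh t k / W" using pos[of t k] W by (simp add: less_imp_le)
        show "fb t k \<in> A" using fbA Lsub[OF i] k by blast
      qed
      also have "\<dots> = (\<Sum>j\<in>Lam Omega i t. wh t j * lb j) / W"
        by (simp add: lb_def sum_divide_distrib)
      finally have "l (fh (Suc t) i) (y (Suc t)) \<le> (\<Sum>j\<in>Lam Omega i t. wh t j * lb j) / W" .
      hence "ew * l (fh (Suc t) i) (y (Suc t)) \<le> ew * ((\<Sum>j\<in>Lam Omega i t. wh t j * lb j) / W)"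
        using ew by (intro mult_left_mono) auto
      thus ?thesis using W ew by (intro mult_left_mono) auto
    qed
    finally show ?thesis by (simp add: W_def)
  qed
  have Wnn: "0 \<le> wh t j" for t j using pos[of t j] by simp
  have soc: "n < T \<Longrightarrow> (\<Sum>j\<in>Lam Omega i n. wh (Suc n) j)
     \<le> real (card (Lam Omega i 0)) * exp (- ew * (\<Sum>s=1..Suc n. l (fh s i) (y s)) + real (Suc n) * ew\<^sup>2 / 8)" for n
  proof (induction n)
    case 0
    have "(\<Sum>j\<in>Lam Omega i 0. wh (Suc 0) j) \<le> (\<Sum>j\<in>Lam Omega i 0. wh 0 j) * exp (- ew * l (fh (Suc 0) i) (y (Suc 0)) + ew\<^sup>2 / 8)"
      by (rule soc_step)
    thus ?case by (simp add: S0)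
  next
    case (Suc n)
    have sub: "Lam Omega i (Suc n) \<subseteq> Lam Omega i n"
      using A1[of "Suc n"] Suc.prems unfolding Lam_def by auto
    have "(\<Sum>j\<in>Lam Omega i (Suc n). wh (Suc (Suc n)) j) \<le> (\<Sum>j\<in>Lam Omega i (Suc n). wh (Suc n) j) * exp (- ew * l (fh (Suc (Suc n)) i) (y (Suc (Suc n))) + ew\<^sup>2 / 8)"
      by (rule soc_step)
    also have "\<dots> \<le> (\<Sum>j\<in>Lam Omega i n. wh (Suc n) j) * exp (- ew * l (fh (Suc (Suc n)) i) (y (Suc (Suc n))) + ew\<^sup>2 / 8)"
      by (intro mult_right_mono sum_mono2[OF Lfin[OF i] sub]) (auto simp: Wnn)
    also have "\<dots> \<le> real (card (Lam Omega i 0)) * exp (- ew * (\<Sum>s=1..Suc n. l (fh s i) (y s)) + real (Suc n) * ew\<^sup>2 / 8)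
        * exp (- ew * l (fh (Suc (Suc n)) i) (y (Suc (Suc n))) + ew\<^sup>2 / 8)"
      using Suc.IH Suc.prems by (intro mult_right_mono) auto
    also have "\<dots> = real (card (Lam Omega i 0)) * exp (- ew * (\<Sum>s=1..Suc (Suc n). l (fh s i) (y s)) + real (Suc (Suc n)) * ew\<^sup>2 / 8)"
      by (simp add: exp_add[symmetric] algebra_simps)
    finally show ?case .
  qed
  define Lh where "Lh = cumLhat ea ew l f y Omega T i"
  define Lbi where "Lbi = cumLbar ea ew l f y Omega T i"
  define Lbj where "Lbj = cumLbar ea ew l f y Omega T jstar"
  define Li where "Li = cumL l f y T i"
  define d where "d = real (card (Lam Omega i 0))"
  have Lh_eq: "Lh = (\<Sum>s=1..T. l (fh s i) (y s))"
    by (simp add: Lh_def cumLhat_def fhat_def fh_def S_def)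
  have Lb_eq: "cumLbar ea ew l f y Omega T j = (\<Sum>s=1..T. l (fb (s - 1) j) (y s))" for j
    by (simp add: cumLbar_def fbar_def fb_def S_def)
  have dpos: "d > 0" unfolding d_def using Lfin[OF i] Lmem by (simp add: card_gt_0_iff) blast
  have TT: "Suc (T - 1) = T" using T by simp
  have "exp (- ew * Lbi) \<le> (\<Sum>j\<in>Lam Omega i (T - 1). wh T j)"
    unfolding Lbi_def Lb_eq wh_cf[symmetric]
    by (rule member_le_sum[OF Lmem]) (auto simp: Wnn Lfin[OF i])
  also have "\<dots> \<le> d * exp (- ew * Lh + real T * ew\<^sup>2 / 8)"
    using soc[of "T - 1"] T unfolding TT Lh_eq d_def by simp
  finally have "ln (exp (- ew * Lbi)) \<le> ln (d * exp (- ew * Lh + real T * ew\<^sup>2 / 8))"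
    by (intro ln_mono) (use dpos in auto)
  hence s1: "- ew * Lbi \<le> ln d + (- ew * Lh + real T * ew\<^sup>2 / 8)"
    using dpos by (simp add: ln_mult)
  have soc_fin: "Lh - Lbi - ew * real T / 8 \<le> ln d / ew"
  proof -
    have "(Lh - Lbi - ew * real T / 8) * ew \<le> ln d" using s1 by (simp add: algebra_simps power2_eq_square)
    thus ?thesis by (subst pos_le_divide_eq[OF ew])
  qed
  have "exp (- ea * Li) \<le> 2 * exp (- ea * Lbi + real T * ea\<^sup>2 / 8)"
    using ind[of T] pos[of T i] unfolding Li_def cumL_def Lbi_def Lb_eq ah_cf[symmetric] by linarith
  hence "ln (exp (- ea * Li)) \<le> ln (2 * exp (- ea * Lbi + real T * ea\<^sup>2 / 8))"
    by (intro ln_mono) auto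
  hence s2: "- ea * Li \<le> ln 2 + (- ea * Lbi + real T * ea\<^sup>2 / 8)"
    by (simp add: ln_mult)
  have ind_fin: "Lbi - Li - ea * real T / 8 \<le> ln 2 / ea"
  proof -
    have "(Lbi - Li - ea * real T / 8) * ea \<le> ln 2" using s2 by (simp add: algebra_simps power2_eq_square)
    thus ?thesis by (subst pos_le_divide_eq[OF ea])
  qed
  have lip: "Li \<le> cumL l f y T istar + L1 * Delta_o"
  proof -
    have "Li \<le> (\<Sum>t=1..T. l (f t istar) (y t) + L1 * delta t)"
      unfolding Li_def cumL_def
    proof (rule sum_mono)
      fix t assume t: "t \<in> {1..T}"
      have "\<bar>l (f t i) (y t) - l (f t istar) (y t)\<bar> \<le> L1 * norm (f t i - f t istar)"
        using A2 fA t i istar(1) yY by auto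
      also have "\<dots> \<le> L1 * delta t" using A3[of t i istar] t i istar(1) L1 by (intro mult_left_mono) auto
      finally show "l (f t i) (y t) \<le> l (f t istar) (y t) + L1 * delta t" by linarith
    qed
    also have "\<dots> = cumL l f y T istar + L1 * (\<Sum>t=1..T. delta t)"
      by (simp add: cumL_def sum.distrib sum_distrib_left)
    also have "\<dots> \<le> cumL l f y T istar + L1 * Delta_o"
      using Delta_o L1 by (intro add_left_mono mult_left_mono) auto
    finally show ?thesis .
  qed
  have Lbj_nn: "0 \<le> Lbj" unfolding Lbj_def Lb_eq
    using lr fbA jstar(1) by (intro sum_nonneg) blast
  show ?thesis
    using soc_fin ind_fin lip A4 Lbj_nn
    unfolding Lh_def[symmetric] Lbj_def[symmetric] d_def[symmetric]
    by (simp add: algebra_simps)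
qed
end
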